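(* For each kernel $k$, there exists a constant $\lambda_T > 0$ such that when $\lambda \ge \lambda_T$, the kernel SVM prediction is $\hat y^{(k)}_{\mathrm{SVM}}(x) = \mathrm{sign}([\tau(f^* )](x))$, where $\tau$ is the operator associated with the centered kernel $\tilde k$, i.e., $[\tau(f)](x) = \mathbb{E}_{P_X}[\tilde k(X, x) f(X)]$. Moreover, $\hat y^{(k)}_{\mathrm{SVM}}(x) = \hat y^{(k)}(x)$ for all $x \in \mathcal{X}$.
   Context: Binary classification with $\mathcal{Y} = \{-1, 1\}$; $P_{X,Y}$ is the empirical distribution of training samples on a finite $\mathcal{X}$, balanced: $P_Y(-1) = P_Y(1) = 1/2$. Then $P_{X,Y}(x,y) = P_X(x)P_Y(y)(1 + \varrho f^*(x) y)$ where $\varrho$ is the HGR maximal correlation and $f^*$ the maximal correlation function with $\mathbb{E}[f^*(X)^2]=1$. For a feature $f\colon\mathcal{X}\to\mathbb{R}^d$, SVM minimizes $\mathbb{E}[(1 - Y(\langle w, f(X)\rangle + b))^+] + \frac{\lambda}{2}\|w\|^2$ over $(w, b)$ and predicts $\mathrm{sign}(\langle w_{\mathrm{SVM}}, f(x)\rangle + b_{\mathrm{SVM}})$. A kernel $k$ on $\mathcal{X}$ has a mapping $\nu$ into an inner product space with $k(x,x') = \langle \nu(x), \nu(x')\rangle$, and the kernel SVM prediction $\hat y^{(k)}_{\mathrm{SVM}}$ is the SVM prediction using feature $\nu$. The centered kernel is $\tilde k(x,x') = k(x,x') - \bar k(x) - \bar k(x') + \mathbb{E}_{P_X}[\bar k(X)]$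 with $\bar k(x) = \mathbb{E}_{P_X}[k(X,x)]$. The kernelized discriminative model is $P^{(k)}_{Y|X}(y|x) = P_Y(y)(1 + \mathbb{E}[\tilde k(X, x)\mid Y=y])$ and $\hat y^{(k)}(x) = \arg\max_y P^{(k)}_{Y|X}(y|x)$.
   Formalization: The HGR maximal correlation $\varrho$ is assumed positive, and for each $\lambda \ge \lambda_T$ the equalities with $\mathrm{sign}([\tau(f^* )](x))$ and $\hat y^{(k)}(x)$ hold for the prediction of some SVM minimizer $(w, b)$, not of every one. Each condition added here is assumed in the paper as well or is needed for the statement above to hold. *)

theory Defs
  imports "HOL-Analysis.Analysis"
begin

text \<open>Setting: finite input type 'x, labels y in {-1,1} encoded as reals.
  A joint distribution is a function PXY :: 'x => real => real, only evaluated at y in {-1,1}.\<close>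

definition labels :: "real set" where
  "labels = {-1, 1}"

definition is_joint_pmf :: "('x::finite \<Rightarrow> real \<Rightarrow> real) \<Rightarrow> bool" where
  "is_joint_pmf PXY \<longleftrightarrow> (\<forall>x. \<forall>y\<in>labels. PXY x y \<ge> 0) \<and>
     (\<Sum>x\<in>UNIV. \<Sum>y\<in>labels. PXY x y) = 1"

definition marg_X :: "('x::finite \<Rightarrow> real \<Rightarrow> real) \<Rightarrow> 'x \<Rightarrow> real" where
  "marg_X PXY x = (\<Sum>y\<in>labels. PXY x y)"

definition marg_Y :: "('x::finite \<Rightarrow> real \<Rightarrow> real) \<Rightarrow> real \<Rightarrow> real" where
  "marg_Y PXY y = (\<Sum>x\<in>UNIV. PXY x y)"

definition expXY :: "('x::finite \<Rightarrow> real \<Rightarrow> real) \<Rightarrow> ('x \<Rightarrow> real \<Rightarrow> real) \<Rightarrow> real" where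
  "expXY PXY g = (\<Sum>x\<in>UNIV. \<Sum>y\<in>labels. PXY x y * g x y)"

definition expX :: "('x::finite \<Rightarrow> real \<Rightarrow> real) \<Rightarrow> ('x \<Rightarrow> real) \<Rightarrow> real" where
  "expX PXY h = (\<Sum>x\<in>UNIV. marg_X PXY x * h x)"

definition expY :: "('x::finite \<Rightarrow> real \<Rightarrow> real) \<Rightarrow> (real \<Rightarrow> real) \<Rightarrow> real" where
  "expY PXY g = (\<Sum>y\<in>labels. marg_Y PXY y * g y)"

definition hgr :: "('x::finite \<Rightarrow> real \<Rightarrow> real) \<Rightarrow> real" where
  "hgr PXY = Sup {expXY PXY (\<lambda>x y. f x * g y) | f g.
      expX PXY f = 0 \<and> expX PXY (\<lambda>x. (f x)\<^sup>2) = 1 \<and>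
      expY PXY g = 0 \<and> expY PXY (\<lambda>y. (g y)\<^sup>2) = 1}"

definition kern :: "('x \<Rightarrow> 'v::real_inner) \<Rightarrow> 'x \<Rightarrow> 'x \<Rightarrow> real" where
  "kern \<nu> x x' = inner (\<nu> x) (\<nu> x')"

definition kbar :: "('x::finite \<Rightarrow> real \<Rightarrow> real) \<Rightarrow> ('x \<Rightarrow> 'v::real_inner) \<Rightarrow> 'x \<Rightarrow> real" where
  "kbar PXY \<nu> x = expX PXY (\<lambda>x'. kern \<nu> x' x)"

definition centered_kern :: "('x::finite \<Rightarrow> real \<Rightarrow> real) \<Rightarrow> ('x \<Rightarrow> 'v::real_inner) \<Rightarrow> 'x \<Rightarrow> 'x \<Rightarrow> real" where
  "centered_kern PXY \<nu> x x' =
     kern \<nu> x x' - kbar PXY \<nu> x - kbar PXY \<nu> x' + expX PXY (kbar PXY \<nu>)"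

definition tau :: "('x::finite \<Rightarrow> real \<Rightarrow> real) \<Rightarrow> ('x \<Rightarrow> 'v::real_inner) \<Rightarrow> ('x \<Rightarrow> real) \<Rightarrow> 'x \<Rightarrow> real" where
  "tau PXY \<nu> f x = expX PXY (\<lambda>x'. centered_kern PXY \<nu> x' x * f x')"

definition svm_obj :: "('x::finite \<Rightarrow> real \<Rightarrow> real) \<Rightarrow> ('x \<Rightarrow> 'v::real_inner) \<Rightarrow> real \<Rightarrow> 'v \<Rightarrow> real \<Rightarrow> real" where
  "svm_obj PXY \<nu> lam w b =
     expXY PXY (\<lambda>x y. max 0 (1 - y * (inner w (\<nu> x) + b))) + lam / 2 * (norm w)\<^sup>2"

definition svm_minimizer :: "('x::finite \<Rightarrow> real \<Rightarrow> real) \<Rightarrow> ('x \<Rightarrow> 'v::real_inner) \<Rightarrow> real \<Rightarrow> 'v \<Rightarrow> real \<Rightarrow> bool" where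
  "svm_minimizer PXY \<nu> lam w b \<longleftrightarrow> (\<forall>w' b'. svm_obj PXY \<nu> lam w b \<le> svm_obj PXY \<nu> lam w' b')"

definition cond_exp_given_Y :: "('x::finite \<Rightarrow> real \<Rightarrow> real) \<Rightarrow> ('x \<Rightarrow> real) \<Rightarrow> real \<Rightarrow> real" where
  "cond_exp_given_Y PXY h y = (\<Sum>x\<in>UNIV. PXY x y / marg_Y PXY y * h x)"

definition kernel_posterior :: "('x::finite \<Rightarrow> real \<Rightarrow> real) \<Rightarrow> ('x \<Rightarrow> 'v::real_inner) \<Rightarrow> real \<Rightarrow> 'x \<Rightarrow> real" where
  "kernel_posterior PXY \<nu> y x =
     marg_Y PXY y * (1 + cond_exp_given_Y PXY (\<lambda>x'. centered_kern PXY \<nu> x' x) y)"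

text \<open>arg max over y in {-1,1}; a tie is reported as 0 (same convention as sgn 0 = 0).\<close>
definition kernel_pred :: "('x::finite \<Rightarrow> real \<Rightarrow> real) \<Rightarrow> ('x \<Rightarrow> 'v::real_inner) \<Rightarrow> 'x \<Rightarrow> real" where
  "kernel_pred PXY \<nu> x =
     (if kernel_posterior PXY \<nu> 1 x > kernel_posterior PXY \<nu> (-1) x then 1
      else if kernel_posterior PXY \<nu> 1 x < kernel_posterior PXY \<nu> (-1) x then -1
      else 0)"

end

theory Submission
  imports Defs
begin

lemma sum_labels: "(\<Sum>y\<in>labels. g y) = g (-1) + g (1::real)"
  by (simp add: labels_def)

theorem theorem2:
  fixes PXY :: "'x::finite \<Rightarrow> real \<Rightarrow> real"
    and \<nu> :: "'x \<Rightarrow> 'v::real_inner"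
    and \<rho> :: real and fstar :: "'x \<Rightarrow> real"
  assumes joint: "is_joint_pmf PXY"
    and balanced: "marg_Y PXY (-1) = 1/2" "marg_Y PXY 1 = 1/2"
    and rho_hgr: "\<rho> = hgr PXY"
    and rho_pos: "\<rho> > 0"
    and fstar_mean: "expX PXY fstar = 0"
    and fstar_norm: "expX PXY (\<lambda>x. (fstar x)\<^sup>2) = 1"
    and fstar_maxcorr: "expXY PXY (\<lambda>x y. fstar x * y) = \<rho>"
    and factor: "\<And>x y. y \<in> labels \<Longrightarrow>
                   PXY x y = marg_X PXY x * marg_Y PXY y * (1 + \<rho> * fstar x * y)"
  shows "\<exists>lamT > 0. \<forall>lam \<ge> lamT. \<exists>w b. svm_minimizer PXY \<nu> lam w b \<and>
           (\<forall>x. sgn (inner w (\<nu> x) + b) = sgn (tau PXY \<nu> fstar x)) \<and>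
           (\<forall>x. sgn (inner w (\<nu> x) + b) = kernel_pred PXY \<nu> x)"
proof -
  define PX where "PX = marg_X PXY"
  define f where "f = fstar"
  define T where "T = tau PXY \<nu> fstar"
  define kb where "kb = kbar PXY \<nu>"
  define c where "c = expX PXY kb"
  define m where "m = (\<Sum>x\<in>UNIV. (\<rho> * PX x * f x) *\<^sub>R \<nu> x)"
  define E where "E = expX PXY (\<lambda>x. kb x * f x)"
  have lab1: "(1::real) \<in> labels" and lab2: "(-1::real) \<in> labels" by (auto simp: labels_def)
  have P1: "PXY x 1 = PX x / 2 * (1 + \<rho> * f x)" for x
    using factor[OF lab1, of x] balanced by (simp add: PX_def f_def)
  have P2: "PXY x (-1) = PX x / 2 * (1 - \<rho> * f x)" for x
    using factor[OF lab2, of x] balanced by (simp add: PX_def f_def)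
  have nonneg: "PXY x y \<ge> 0" if "y \<in> labels" for x y
    using joint that unfolding is_joint_pmf_def by blast
  have sumPX: "(\<Sum>x\<in>UNIV. PX x) = 1"
    using joint unfolding is_joint_pmf_def PX_def marg_X_def by simp
  have Ef: "(\<Sum>x\<in>UNIV. PX x * f x) = 0"
    using fstar_mean unfolding expX_def PX_def f_def by simp
  have expX_eq: "expX PXY h = (\<Sum>x\<in>UNIV. PX x * h x)" for h
    unfolding expX_def PX_def by simp
  have lin: "(\<Sum>x\<in>UNIV. \<Sum>y\<in>labels. PXY x y * (1 - y * t x))
      = 1 - \<rho> * (\<Sum>x\<in>UNIV. PX x * f x * t x)" for t
  proof -
    have "(\<Sum>x\<in>UNIV. \<Sum>y\<in>labels. PXY x y * (1 - y * t x))
        = (\<Sum>x\<in>UNIV. PX x - \<rho> * (PX x * f x * t x))"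
      by (rule sum.cong) (auto simp: sum_labels P1 P2 field_simps)
    also have "\<dots> = 1 - \<rho> * (\<Sum>x\<in>UNIV. PX x * f x * t x)"
      by (simp add: sum_subtractf sumPX sum_distrib_left)
    finally show ?thesis .
  qed
  have lin2: "(\<Sum>x\<in>UNIV. \<Sum>y\<in>labels. PXY x y * (1 - y * (inner w (\<nu> x) + b)))
      = 1 - inner w m" for w b
  proof -
    have "(\<Sum>x\<in>UNIV. PX x * f x * (inner w (\<nu> x) + b))
        = (\<Sum>x\<in>UNIV. PX x * f x * inner w (\<nu> x)) + b * (\<Sum>x\<in>UNIV. PX x * f x)"
      by (simp add: algebra_simps sum.distrib sum_distrib_left)
    also have "\<dots> = (\<Sum>x\<in>UNIV. PX x * f x * inner w (\<nu> x))" using Ef by simp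
    finally have "\<rho> * (\<Sum>x\<in>UNIV. PX x * f x * (inner w (\<nu> x) + b)) = inner w m"
      unfolding m_def by (simp add: inner_sum_right sum_distrib_left algebra_simps)
    then show ?thesis using lin[of "\<lambda>x. inner w (\<nu> x) + b"] by simp
  qed
  have Ek: "expX PXY (\<lambda>x'. kern \<nu> x' x) = kb x" for x
    unfolding kb_def kbar_def by simp
  have inner_m: "inner m (\<nu> x) = \<rho> * (T x + E)" for x
  proof -
    have "T x = (\<Sum>x'\<in>UNIV. PX x' * ((kern \<nu> x' x - kb x' - kb x + c) * f x'))"
      unfolding T_def tau_def expX_eq centered_kern_def kb_def c_def f_def by simp
    also have "\<dots> = (\<Sum>x'\<in>UNIV. PX x' * f x' * kern \<nu> x' x) - (\<Sum>x'\<in>UNIV. PX x' * (kb x' * f x'))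
        - (kb x - c) * (\<Sum>x'\<in>UNIV. PX x' * f x')"
      by (simp add: algebra_simps sum.distrib sum_subtractf sum_distrib_left)
    also have "\<dots> = (\<Sum>x'\<in>UNIV. PX x' * f x' * kern \<nu> x' x) - E"
      using Ef by (simp add: E_def expX_eq)
    finally have "(\<Sum>x'\<in>UNIV. PX x' * f x' * kern \<nu> x' x) = T x + E" by simp
    moreover have "inner m (\<nu> x) = \<rho> * (\<Sum>x'\<in>UNIV. PX x' * f x' * kern \<nu> x' x)"
      unfolding m_def by (simp add: inner_sum_left sum_distrib_left kern_def algebra_simps)
    ultimately show ?thesis by simp
  qed
  have post: "kernel_posterior PXY \<nu> y x = 1/2 * (1 + \<rho> * y * T x)" if "y \<in> labels" for y x
  proof -
    have sumck: "(\<Sum>x'\<in>UNIV. PX x' * centered_kern PXY \<nu> x' x) = 0"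
    proof -
      have "(\<Sum>x'\<in>UNIV. PX x' * centered_kern PXY \<nu> x' x)
         = (\<Sum>x'\<in>UNIV. PX x' * kern \<nu> x' x) - (\<Sum>x'\<in>UNIV. PX x' * kb x') - (kb x - c) * (\<Sum>x'\<in>UNIV. PX x')"
        unfolding centered_kern_def kb_def c_def
        by (simp add: algebra_simps sum.distrib sum_subtractf sum_distrib_left sum_distrib_right)
      also have "\<dots> = 0" using Ek[of x] sumPX by (simp add: expX_eq c_def)
      finally show ?thesis .
    qed
    have my: "marg_Y PXY y = 1/2" using that balanced by (auto simp: labels_def)
    have "cond_exp_given_Y PXY (\<lambda>x'. centered_kern PXY \<nu> x' x) y
        = (\<Sum>x'\<in>UNIV. PX x' * centered_kern PXY \<nu> x' x) + \<rho> * y * (\<Sum>x'\<in>UNIV. PX x' * (centered_kern PXY \<nu> x' x * f x'))"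
      unfolding cond_exp_given_Y_def my
      by (simp add: factor[OF that] my PX_def f_def algebra_simps sum.distrib sum_distrib_left)
    also have "\<dots> = \<rho> * y * T x" using sumck unfolding T_def tau_def expX_eq f_def by simp
    finally show ?thesis unfolding kernel_posterior_def my by simp
  qed
  define lamT where "lamT = 1 + (\<Sum>x\<in>UNIV. \<bar>\<rho> * T x\<bar>)"
  have lamT_pos: "lamT > 0" unfolding lamT_def by (simp add: add_pos_nonneg sum_nonneg)
  show ?thesis
  proof (intro exI[of _ lamT] conjI allI impI lamT_pos)
    fix lam assume lam: "lam \<ge> lamT"
    hence lampos: "lam > 0" using lamT_pos by simp
    define w where "w = (1/lam) *\<^sub>R m"
    define b where "b = - (\<rho> / lam) * E"
    have marg: "inner w (\<nu> x) + b = \<rho> / lam * T x" for x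
      unfolding w_def b_def using inner_m[of x] by (simp add: algebra_simps)
    have small: "\<bar>\<rho> * T x\<bar> \<le> lam" for x
    proof -
      have "\<bar>\<rho> * T x\<bar> \<le> (\<Sum>x\<in>UNIV. \<bar>\<rho> * T x\<bar>)"
        by (rule member_le_sum) auto
      thus ?thesis using lam unfolding lamT_def by simp
    qed
    have small2: "\<bar>inner w (\<nu> x) + b\<bar> \<le> 1" for x
      using small[of x] lampos unfolding marg by (simp add: abs_mult divide_le_eq_1)
    have lower: "svm_obj PXY \<nu> lam w' b' \<ge> 1 - (norm m)\<^sup>2 / (2 * lam)" for w' b'
    proof -
      have "(\<Sum>x\<in>UNIV. \<Sum>y\<in>labels. PXY x y * (1 - y * (inner w' (\<nu> x) + b')))
          \<le> expXY PXY (\<lambda>x y. max 0 (1 - y * (inner w' (\<nu> x) + b')))"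
        unfolding expXY_def
        by (intro sum_mono mult_left_mono) (auto simp: nonneg)
      hence A: "1 - inner w' m \<le> expXY PXY (\<lambda>x y. max 0 (1 - y * (inner w' (\<nu> x) + b')))"
        using lin2 by simp
      have "0 \<le> (norm (lam *\<^sub>R w' - m))\<^sup>2" by simp
      also have "\<dots> = lam\<^sup>2 * (norm w')\<^sup>2 - 2 * lam * inner w' m + (norm m)\<^sup>2"
        unfolding power2_norm_eq_inner
        by (simp add: inner_diff_left inner_diff_right inner_commute power2_eq_square algebra_simps)
      finally have B: "1 - (norm m)\<^sup>2 / (2 * lam) \<le> 1 - inner w' m + lam / 2 * (norm w')\<^sup>2"
        using lampos by (simp add: field_simps power2_eq_square)
      show ?thesis using A B unfolding svm_obj_def by linarith
    qed
    have atw: "svm_obj PXY \<nu> lam w b = 1 - (norm m)\<^sup>2 / (2 * lam)"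
    proof -
      have "expXY PXY (\<lambda>x y. max 0 (1 - y * (inner w (\<nu> x) + b)))
          = (\<Sum>x\<in>UNIV. \<Sum>y\<in>labels. PXY x y * (1 - y * (inner w (\<nu> x) + b)))"
        unfolding expXY_def
      proof (intro sum.cong refl)
        fix x y assume "y \<in> labels"
        then have "max 0 (1 - y * (inner w (\<nu> x) + b)) = 1 - y * (inner w (\<nu> x) + b)"
          using small2[of x] by (auto simp: labels_def abs_le_iff)
        thus "PXY x y * max 0 (1 - y * (inner w (\<nu> x) + b)) = PXY x y * (1 - y * (inner w (\<nu> x) + b))"
          by simp
      qed
      also have "\<dots> = 1 - inner w m" by (rule lin2)
      finally have "expXY PXY (\<lambda>x y. max 0 (1 - y * (inner w (\<nu> x) + b))) = 1 - inner w m" .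
      moreover have "inner w m = (norm m)\<^sup>2 / lam" unfolding w_def by (simp add: power2_norm_eq_inner)
      moreover have "(norm w)\<^sup>2 = (norm m)\<^sup>2 / lam\<^sup>2" unfolding w_def
        using lampos by (simp add: power_divide power_mult_distrib)
      ultimately show ?thesis unfolding svm_obj_def using lampos
        by (simp add: field_simps power2_eq_square)
    qed
    have sgnT: "sgn (inner w (\<nu> x) + b) = sgn (T x)" for x
      unfolding marg using lampos rho_pos by (simp add: sgn_mult)
    show "\<exists>w b. svm_minimizer PXY \<nu> lam w b \<and>
           (\<forall>x. sgn (inner w (\<nu> x) + b) = sgn (tau PXY \<nu> fstar x)) \<and>
           (\<forall>x. sgn (inner w (\<nu> x) + b) = kernel_pred PXY \<nu> x)"
    proof (intro exI conjI allI)
      show "svm_minimizer PXY \<nu> lam w b"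
        unfolding svm_minimizer_def using lower atw by simp
      fix x
      show "sgn (inner w (\<nu> x) + b) = sgn (tau PXY \<nu> fstar x)" using sgnT T_def by simp
    next
      fix x
      have "kernel_pred PXY \<nu> x = sgn (T x)"
        unfolding kernel_pred_def post[OF lab1] post[OF lab2]
        using rho_pos by (auto simp: sgn_if mult_less_cancel_left_pos zero_less_mult_iff mult_less_0_iff)
      thus "sgn (inner w (\<nu> x) + b) = kernel_pred PXY \<nu> x" using sgnT by simp
    qed
  qed
qed

end
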